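(* Let $P=\frac{1}{\sqrt2}\begin{bmatrix}1&1\\0&0\end{bmatrix}$, $Q=\frac{1}{\sqrt2}\begin{bmatrix}0&0\\1&-1\end{bmatrix}$ and $J=\begin{bmatrix}0&-1\\1&0\end{bmatrix}$. For an initial state $\varphi\in\mathbb{C}^2$ with $\|\varphi\|=1$, define $\Psi^{(n)}_k(\varphi)\in\mathbb{C}^2$ for $n\in\mathbb{Z}_+=\{0,1,2,\dots\}$ and $k\in\mathbb{Z}$ by $\Psi^{(0)}_0(\varphi)=\varphi$, $\Psi^{(0)}_k(\varphi)=0$ for $k\neq 0$, and $\Psi^{(n+1)}_k(\varphi)=Q\Psi^{(n)}_{k-1}(\varphi)+P\Psi^{(n)}_{k+1}(\varphi)$. (i) If $\varphi=\frac{e^{i\theta}}{\sqrt2}\begin{bmatrix}1\\ i\end{bmatrix}$ with $\theta\in[0,2\pi)$, then $\Psi^{(n)}_k(\varphi)=(-1)^n\, i\, J\,\Psi^{(n)}_{-k}(\varphi)$ for all $k\in\mathbb{Z}$ and $n\in\mathbb{Z}_+$. (ii) If $\varphi=\frac{e^{i\theta}}{\sqrt2}\begin{bmatrix}1\\ -i\end{bmatrix}$ with $\theta\in[0,2\pi)$, then $\Psi^{(n)}_k(\varphi)=(-1)^n\,(-i)\, J\,\Psi^{(n)}_{-k}(\varphi)$ for all $k\in\mathbb{Z}$ and $n\in\mathbb{Z}_+$.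
   Context: This is the one-dimensional Hadamard walk: $H=\frac{1}{\sqrt2}\begin{bmatrix}1&1\\1&-1\end{bmatrix}=P+Q$, the upper (resp. lower) component of $\Psi^{(n)}_k(\varphi)$ is the amplitude of the particle at site $k$ at time $n$ with left (resp. right) chirality. The paper realizes the walk on a large cycle of $2N+1$ sites with the particle started at the middle site; for the times considered this coincides with the walk on $\mathbb{Z}$ described in the claim. *)

theory Defs
  imports "HOL-Analysis.Analysis"
begin

definition Pmat :: "complex^2^2" where
  "Pmat = vector [vector [1 / complex_of_real (sqrt 2), 1 / complex_of_real (sqrt 2)], vector [0, 0]]"

definition Qmat :: "complex^2^2" where
  "Qmat = vector [vector [0, 0], vector [1 / complex_of_real (sqrt 2), - 1 / complex_of_real (sqrt 2)]]"

definition Jmat :: "complex^2^2" where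
  "Jmat = vector [vector [0, -1], vector [1, 0]]"

fun Psi :: "complex^2 \<Rightarrow> nat \<Rightarrow> int \<Rightarrow> complex^2" where
  "Psi phi 0 k = (if k = 0 then phi else 0)"
| "Psi phi (Suc n) k = Qmat *v Psi phi n (k - 1) + Pmat *v Psi phi n (k + 1)"

end

theory Submission
  imports Defs
begin

lemma key:
  fixes x y :: "complex^2" and a :: complex
  shows "Qmat *v (a *s (Jmat *v x)) + Pmat *v (a *s (Jmat *v y))
         = (- a) *s (Jmat *v (Qmat *v y + Pmat *v x))"
  unfolding Qmat_def Pmat_def Jmat_def
  by (simp add: vec_eq_iff forall_2 matrix_vector_mult_def sum_2 algebra_simps diff_divide_distrib add_divide_distrib)

lemma gen:
  assumes "phi = c *s (Jmat *v phi)"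
  shows "Psi phi n k = ((-1) ^ n * c) *s (Jmat *v Psi phi n (- k))"
proof (induction n arbitrary: k)
  case 0
  then show ?case using assms by simp
next
  case (Suc n)
  have "Psi phi (Suc n) k = Qmat *v (((-1) ^ n * c) *s (Jmat *v Psi phi n (- (k - 1))))
        + Pmat *v (((-1) ^ n * c) *s (Jmat *v Psi phi n (- (k + 1))))"
    using Suc.IH[of "k-1"] Suc.IH[of "k+1"] by simp
  also have "\<dots> = (- ((-1) ^ n * c)) *s (Jmat *v (Qmat *v Psi phi n (- (k + 1)) + Pmat *v Psi phi n (- (k - 1))))"
    by (rule key)
  also have "\<dots> = ((-1) ^ Suc n * c) *s (Jmat *v Psi phi (Suc n) (- k))"
  proof -
    have e: "- (k + 1) = - k - 1" "- (k - 1) = - k + 1" by simp_all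
    show ?thesis unfolding e Psi.simps(2) by simp
  qed
  finally show ?case .
qed

theorem lemma1:
  fixes \<theta> :: real
  assumes "0 \<le> \<theta>" and "\<theta> < 2 * pi"
  shows "(\<forall>(n::nat) (k::int).
            Psi ((exp (\<i> * complex_of_real \<theta>) / complex_of_real (sqrt 2)) *s vector [1, \<i>]) n k
          = ((-1) ^ n * \<i>) *s (Jmat *v
            Psi ((exp (\<i> * complex_of_real \<theta>) / complex_of_real (sqrt 2)) *s vector [1, \<i>]) n (- k)))
       \<and> (\<forall>(n::nat) (k::int).
            Psi ((exp (\<i> * complex_of_real \<theta>) / complex_of_real (sqrt 2)) *s vector [1, - \<i>]) n k
          = ((-1) ^ n * (- \<i>)) *s (Jmat *v
            Psi ((exp (\<i> * complex_of_real \<theta>) / complex_of_real (sqrt 2)) *s vector [1, - \<i>]) n (- k)))"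
proof (intro conjI allI)
  fix n :: nat and k :: int
  let ?e = "exp (\<i> * complex_of_real \<theta>) / complex_of_real (sqrt 2)"
  have h1: "?e *s vector [1, \<i>] = \<i> *s (Jmat *v (?e *s vector [1, \<i>]))"
    unfolding Jmat_def
    by (simp add: vec_eq_iff forall_2 matrix_vector_mult_def sum_2 algebra_simps)
  show "Psi (?e *s vector [1, \<i>]) n k = ((-1) ^ n * \<i>) *s (Jmat *v Psi (?e *s vector [1, \<i>]) n (- k))"
    by (rule gen[OF h1])
next
  fix n :: nat and k :: int
  let ?e = "exp (\<i> * complex_of_real \<theta>) / complex_of_real (sqrt 2)"
  have h1: "?e *s vector [1, - \<i>] = (- \<i>) *s (Jmat *v (?e *s vector [1, - \<i>]))"
    unfolding Jmat_def
    by (simp add: vec_eq_iff forall_2 matrix_vector_mult_def sum_2 algebra_simps)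
  show "Psi (?e *s vector [1, - \<i>]) n k = ((-1) ^ n * (- \<i>)) *s (Jmat *v Psi (?e *s vector [1, - \<i>]) n (- k))"
    by (rule gen[OF h1])
qed

end
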